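(* Let $A(x)=\sum_{n\ge0}a_nx^n$ and $B(x)=\sum_{k\ge0}b_kx^k$ be formal power series over a field of characteristic $0$, and assume that either $B$ is a polynomial or $a_0=0$ (so that $B(A(x))=\sum_k b_kA(x)^k$ is a well-defined formal power series). Suppose $B(A(x))=x$. Then $a_1\ne0$ and for every $n\ge2$, \[ a_n=-a_1\sum_{k\ge1}b_k\,t^{(k)}_n , \] where the sum has only finitely many nonzero terms.
   Context: For a sequence $(a_n)_{n\ge0}$ with generating function $A(x)=\sum_{n\ge0}a_nx^n$, set $a^{(k)}_n=[x^n]A(x)^k$ for $k\ge1$, $n\ge0$. The truncated convolution powers $t^{(k)}_n$ ($k\ge1$, $n\ge0$) are defined recursively by $t^{(1)}_n=0$ for all $n$, and for $k>1$ \[ t^{(k)}_n=\sum_{j=1}^{n-1}a_{n-j}\,a^{(k-1)}_j+a_0\,t^{(k-1)}_n \] (the sum being empty when $n\le1$). *)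

theory Defs
  imports "HOL-Computational_Algebra.Formal_Power_Series" "HOL-Library.Groups_Big_Fun"
begin

definition conv_pow :: "'a::comm_ring_1 fps \<Rightarrow> nat \<Rightarrow> nat \<Rightarrow> 'a" where
  "conv_pow A k n = fps_nth (A ^ k) n"

text \<open>Truncated convolution powers t^(k)_n for k \<ge> 1 (the value at k = 0 is an
  unused dummy, set to 0).\<close>
fun trunc_pow :: "'a::comm_ring_1 fps \<Rightarrow> nat \<Rightarrow> nat \<Rightarrow> 'a" where
  "trunc_pow A 0 n = 0"
| "trunc_pow A (Suc 0) n = 0"
| "trunc_pow A (Suc (Suc k)) n =
     (\<Sum>j = 1..<n. fps_nth A (n - j) * conv_pow A (Suc k) j) + fps_nth A 0 * trunc_pow A (Suc k) n"

text \<open>General composition B(A(x)) = \<Sum>_k b_k A(x)^k, coefficientwise; the inner sum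
  is a finite-support sum (well defined when B is a polynomial or fps_nth A 0 = 0).\<close>
definition gen_compose :: "'a::comm_ring_1 fps \<Rightarrow> 'a fps \<Rightarrow> 'a fps" where
  "gen_compose B A = Abs_fps (\<lambda>n. Sum_any (\<lambda>k. fps_nth B k * fps_nth (A ^ k) n))"

end

theory Submission
  imports Defs
begin

lemma pow_suc_nth:
  fixes A :: "'a::comm_ring_1 fps"
  shows "(fps_nth (A ^ Suc k) n) = (\<Sum>j=0..n. (fps_nth (A^k) j) * (fps_nth A (n-j)))"
  by (simp add: power_Suc2 fps_mult_nth del: power_Suc)

lemma key_pos:
  fixes A :: "'a::comm_ring_1 fps"
  assumes "n \<ge> 1"
  shows "(fps_nth (A ^ Suc m) n) = trunc_pow A (Suc m) n + of_nat (Suc m) * ((fps_nth A 0))^m * (fps_nth A n)"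
proof (induction m)
  case 0
  then show ?case by simp
next
  case (Suc m)
  have split: "{0..n} = insert 0 (insert n {1..<n})" using assms by auto
  have "fps_nth (A ^ Suc (Suc m)) n = (\<Sum>j=0..n. (fps_nth (A^Suc m) j) * (fps_nth A (n-j)))"
    by (rule pow_suc_nth)
  also have "\<dots> = (fps_nth (A^Suc m) 0) * (fps_nth A n) + ((fps_nth (A^Suc m) n) * (fps_nth A 0) + (\<Sum>j=1..<n. (fps_nth (A^Suc m) j) * (fps_nth A (n-j))))"
    using assms by (simp add: split)
  also have "\<dots> = trunc_pow A (Suc (Suc m)) n + of_nat (Suc (Suc m)) * ((fps_nth A 0))^(Suc m) * (fps_nth A n)"
  proof -
    have t: "trunc_pow A (Suc (Suc m)) n = (\<Sum>j=1..<n. (fps_nth (A^Suc m) j) * (fps_nth A (n-j))) + fps_nth A 0 * trunc_pow A (Suc m) n"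
      by (simp only: trunc_pow.simps conv_pow_def mult.commute)
    show ?thesis unfolding t Suc fps_power_zeroth
      by (simp add: algebra_simps)
  qed
  finally show ?case .
qed

lemma key:
  fixes A :: "'a::comm_ring_1 fps"
  assumes "n \<ge> 1"
  shows "(fps_nth (A ^ k) n) = trunc_pow A k n + of_nat k * ((fps_nth A 0))^(k-1) * (fps_nth A n)"
proof (cases k)
  case 0
  then show ?thesis using assms by simp
next
  case (Suc m)
  then show ?thesis using key_pos[OF assms] by simp
qed

lemma trunc1: "trunc_pow A k (Suc 0) = 0"
  by (induction A k "Suc 0" rule: trunc_pow.induct) simp_all

lemma pow_vanish:
  fixes A :: "'a::comm_ring_1 fps"
  assumes "(fps_nth A 0) = 0"
  shows "j < k \<Longrightarrow> (fps_nth (A^k) j) = 0"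
proof (induction k arbitrary: j)
  case 0
  then show ?case by simp
next
  case (Suc k)
  have "(fps_nth (A ^ Suc k) j) = (\<Sum>i=0..j. (fps_nth (A^k) i) * (fps_nth A (j-i)))" by (rule pow_suc_nth)
  also have "\<dots> = 0"
  proof (rule sum.neutral, clarify)
    fix i assume "i \<in> {0..j}"
    show "(fps_nth (A^k) i) * (fps_nth A (j-i)) = 0"
    proof (cases "i = j")
      case True then show ?thesis using assms by simp
    next
      case False then show ?thesis using Suc \<open>i \<in> {0..j}\<close> by auto
    qed
  qed
  finally show ?case .
qed

theorem theorem1:
  fixes A B :: "'a::field_char_0 fps"
  assumes wd: "finite {k. fps_nth B k \<noteq> 0} \<or> fps_nth A 0 = 0"
    and inv: "gen_compose B A = fps_X"
  shows "fps_nth A 1 \<noteq> 0 \<and>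
    (\<forall>n\<ge>2. finite {k. k \<ge> 1 \<and> fps_nth B k * trunc_pow A k n \<noteq> 0} \<and>
       fps_nth A n = - fps_nth A 1 * (\<Sum>k\<in>{k. k \<ge> 1 \<and> fps_nth B k * trunc_pow A k n \<noteq> 0}. fps_nth B k * trunc_pow A k n))"
proof -
  define K where "K n = (if finite {k. (fps_nth B k) \<noteq> 0} then {k. (fps_nth B k) \<noteq> 0} else {..n})" for n
  define S where "S n = (\<Sum>k\<in>K n. (fps_nth B k) * of_nat k * ((fps_nth A 0))^(k-1))" for n
  have Kfin: "finite (K n)" for n by (simp add: K_def)
  have outK: "k \<notin> K n \<Longrightarrow> n \<ge> 1 \<Longrightarrow> (fps_nth B k) * (fps_nth (A^k) n) = 0 \<and> (fps_nth B k) * trunc_pow A k n = 0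
      \<and> (fps_nth B k) * of_nat k * ((fps_nth A 0))^(k-1) = 0" for k n
  proof -
    assume k: "k \<notin> K n" and n: "n \<ge> 1"
    show ?thesis
    proof (cases "finite {k. (fps_nth B k) \<noteq> 0}")
      case True then show ?thesis using k by (simp add: K_def)
    next
      case False
      then have a0: "(fps_nth A 0) = 0" and kn: "n < k" using wd k by (auto simp: K_def)
      have p: "(fps_nth (A^k) n) = 0" using pow_vanish[OF a0 kn] .
      have z: "(0::'a)^(k-1) = 0" using kn n by simp
      have "trunc_pow A k n = 0" using key[OF n, of A k] p unfolding a0 z by simp
      then show ?thesis using p a0 z by simp
    qed
  qed
  have coeff: "(fps_nth (gen_compose B A) n) = (\<Sum>k\<in>K n. (fps_nth B k) * trunc_pow A k n) + (fps_nth A n) * S n"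
    if n: "n \<ge> 1" for n
  proof -
    have "(fps_nth (gen_compose B A) n) = Sum_any (\<lambda>k. (fps_nth B k) * (fps_nth (A^k) n))"
      by (simp add: gen_compose_def)
    also have "\<dots> = (\<Sum>k\<in>K n. (fps_nth B k) * (fps_nth (A^k) n))"
      by (rule Sum_any.expand_superset[OF Kfin]) (use outK[OF _ n] in blast)
    also have "\<dots> = (\<Sum>k\<in>K n. (fps_nth B k) * trunc_pow A k n + (fps_nth A n) * ((fps_nth B k) * of_nat k * ((fps_nth A 0))^(k-1)))"
      by (rule sum.cong) (simp_all add: key[OF n] algebra_simps)
    also have "\<dots> = (\<Sum>k\<in>K n. (fps_nth B k) * trunc_pow A k n) + (fps_nth A n) * S n"
      by (simp add: sum.distrib sum_distrib_left S_def)
    finally show ?thesis .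
  qed
  have c1: "1 = (fps_nth A 1) * S 1"
    using coeff[of 1] inv by (simp add: trunc1)
  then have a1: "(fps_nth A 1) \<noteq> 0" by auto
  have main: "finite {k. k \<ge> 1 \<and> (fps_nth B k) * trunc_pow A k n \<noteq> 0} \<and>
       (fps_nth A n) = - (fps_nth A 1) * (\<Sum>k\<in>{k. k \<ge> 1 \<and> (fps_nth B k) * trunc_pow A k n \<noteq> 0}. (fps_nth B k) * trunc_pow A k n)"
    if n: "n \<ge> 2" for n
  proof -
    have n1: "n \<ge> 1" using n by simp
    have sub: "{k. k \<ge> 1 \<and> (fps_nth B k) * trunc_pow A k n \<noteq> 0} \<subseteq> K n"
      using outK[OF _ n1] by blast
    have fin: "finite {k. k \<ge> 1 \<and> (fps_nth B k) * trunc_pow A k n \<noteq> 0}"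
      using finite_subset[OF sub Kfin] .
    have eqs: "(\<Sum>k\<in>{k. k \<ge> 1 \<and> (fps_nth B k) * trunc_pow A k n \<noteq> 0}. (fps_nth B k) * trunc_pow A k n)
        = (\<Sum>k\<in>K n. (fps_nth B k) * trunc_pow A k n)"
      by (rule sum.mono_neutral_left[OF Kfin sub]) (auto simp: Suc_le_eq intro!: Nat.gr0I)
    have Sn: "S n = S 1"
    proof (cases "finite {k. (fps_nth B k) \<noteq> 0}")
      case True then show ?thesis by (simp add: S_def K_def)
    next
      case False
      then have a0: "(fps_nth A 0) = 0" using wd by auto
      have "S m = (fps_nth B 1)" if "m \<ge> 1" for m
      proof -
        have "S m = (\<Sum>k\<in>{..m}. if k = 1 then (fps_nth B 1) else 0)"
          unfolding S_def K_def using False a0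
          by (intro sum.cong) (auto simp: zero_power)
        also have "\<dots> = (fps_nth B 1)" using that by simp
        finally show ?thesis .
      qed
      then show ?thesis using n by simp
    qed
    have "0 = (\<Sum>k\<in>K n. (fps_nth B k) * trunc_pow A k n) + (fps_nth A n) * S 1"
      using coeff[OF n1] inv n Sn by simp
    then have "(fps_nth A n) * S 1 = - (\<Sum>k\<in>K n. (fps_nth B k) * trunc_pow A k n)"
      by (simp add: eq_neg_iff_add_eq_0 add.commute)
    then have "(fps_nth A 1) * ((fps_nth A n) * S 1) = - (fps_nth A 1) * (\<Sum>k\<in>K n. (fps_nth B k) * trunc_pow A k n)" by simp
    then have "(fps_nth A n) = - (fps_nth A 1) * (\<Sum>k\<in>K n. (fps_nth B k) * trunc_pow A k n)"
      using c1 by (simp add: algebra_simps)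
    then show ?thesis using fin eqs by simp
  qed
  show ?thesis using a1 main by blast
qed

end
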